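(* Let $\boldsymbol\lambda\in U$, where $U\subset\mathbb{R}^p$ is an open set on which $\widetilde{\mathbf{X}}\mathbf{D}_{\boldsymbol\lambda'}\widetilde{\mathbf{X}}^\top+\mathbf{I}_n$ is invertible for all $\boldsymbol\lambda'\in U$ and on which, for every $i\in\{1,\dots,n\}$, the set of active constraints of row $i$ of $\widehat{\mathbf{Q}}(\boldsymbol\lambda')$ does not depend on $\boldsymbol\lambda'$. Then $f$ is twice differentiable at $\boldsymbol\lambda$, with gradient $$\nabla f(\boldsymbol\lambda)=\mathrm{diag}(\mathbf{N}),\qquad \mathbf{N}:=\widetilde{\mathbf{X}}^\top\mathbf{G}\Big\{\sum_{i=1}^n\mathbf{e}_i\mathbf{e}_i^\top(\widehat{\mathbf{Y}}-\mathbf{Y})(\mathbf{I}_m-\mathbf{P}_{\mathbf{A}_{0,i}})\Big\}\mathbf{Y}^\top\mathbf{G}\widetilde{\mathbf{X}},$$ (where $\mathrm{diag}(\mathbf N)$ is the vector of diagonal entries of $\mathbf N$) and Hessian $$\nabla^2 f(\boldsymbol\lambda)=(\widetilde{\mathbf{X}}^\top\mathbf{G}\mathbf{Y}\mathbf{Y}^\top\mathbf{G}\widetilde{\mathbf{X}})\circ(\widetilde{\mathbf{X}}^\top\mathbf{G}^2\widetilde{\mathbf{X}})-(\widetilde{\mathbf{X}}^\top\mathbf{G}\widetilde{\mathbf{X}})\circ(\mathbf{N}+\mathbf{N}^\top)-\sum_{i=1}^n(\widetilde{\mathbf{X}}^\top\mathbf{G}\mathbf{Y}\mathbf{P}_{\mathbf{A}_{0,i}}\mathbf{Y}^\top\mathbf{G}\widetilde{\mathbf{X}})\circ(\widetilde{\mathbf{X}}^\top\mathbf{G}\mathbf{e}_i\mathbf{e}_i^\top\mathbf{G}\widetilde{\mathbf{X}}),$$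 where $\mathbf G=\mathbf G(\boldsymbol\lambda)$, $\widehat{\mathbf Y}=\widehat{\mathbf Y}(\boldsymbol\lambda)$ and the $\mathbf{A}_{0,i}$ are those of $\widehat{\mathbf{Q}}(\boldsymbol\lambda)$.
   Context: Let $\mathbf{X}\in\mathbb{R}^{n\times p}$ be column-centered, $\widetilde{\mathbf{X}}=\mathbf{X}/\sqrt n$, and $\mathbf{Y}\in\mathbb{R}^{n\times m}$. For $\boldsymbol\lambda\in\mathbb{R}^p$, $\mathbf{D}_{\boldsymbol\lambda}$ is the diagonal matrix with diagonal $\boldsymbol\lambda$, $\mathbf{G}(\boldsymbol\lambda)=(\widetilde{\mathbf{X}}\mathbf{D}_{\boldsymbol\lambda}\widetilde{\mathbf{X}}^\top+\mathbf{I}_n)^{-1}$, and $\widehat{\mathbf{Y}}(\boldsymbol\lambda)=n^{-1}\mathbf{1}_{n\times n}\mathbf{Y}+\mathbf{Y}-\mathbf{G}(\boldsymbol\lambda)\mathbf{Y}$. The matrix $\mathbf{A}\in\mathbb{R}^{m\times(m+1)}$ has entries $A_{j,j}=1$, $A_{j,j+1}=-1$ ($j=1,\dots,m$), others $0$; $\mathbf{B}\in\mathbb{R}^{n\times(m+1)}$ has every row equal to $(b_L,0,\dots,0,-b_U)$ with $b_L<b_U$ finite. Define $\widehat{\mathbf{Q}}(\boldsymbol\lambda)=\arg\min_{\mathbf{Q}\in\mathbb{R}^{n\times m}}\frac12\|\mathbf{Q}-\widehat{\mathbf{Y}}(\boldsymbol\lambda)\|_F^2$ subject to $\mathbf{B}-\mathbf{Q}\mathbf{A}\le\mathbf{0}$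 (entrywise), and $f(\boldsymbol\lambda)=\frac12\|\widehat{\mathbf{Q}}(\boldsymbol\lambda)-\mathbf{Y}\|_F^2$. For row $i$, constraint $c\in\{1,\dots,m+1\}$ is active if $(\mathbf{B}-\widehat{\mathbf{Q}}\mathbf{A})_{i,c}=0$; $\mathbf{A}_{0,i}$ is the submatrix of columns of $\mathbf{A}$ indexed by the active constraints of row $i$, and $\mathbf{P}_{\mathbf{A}_{0,i}}$ is the orthogonal projector onto its column space ($\mathbf{P}_{\mathbf{A}_{0,i}}=\mathbf{0}$ if no constraint is active). $\mathbf{e}_i$ is the $i$-th standard basis vector of $\mathbb{R}^n$, and $\circ$ is the entrywise (Hadamard) product. *)

theory Defs
  imports "HOL-Analysis.Analysis"
begin

text \<open>Dimensions: rows n = CARD('n), predictors p = CARD('p), quantile levels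
 m = CARD('m). The quantile index type 'm carries a linear order, identifying it
 with {1..m}. The m+1 constraints are indexed by 'm option:
 None is the lower-bound constraint (c = 1), Some j is the constraint c = pos(j)+1,
 i.e. Q(i,j) <= Q(i,succ j), or Q(i,j) <= b_U when j is the largest index.\<close>

definition is_succ :: "'m::linorder \<Rightarrow> 'm \<Rightarrow> bool" where
  "is_succ j k \<longleftrightarrow> j < k \<and> (\<forall>l. j < l \<longrightarrow> k \<le> l)"

definition Amat :: "real^('m option)^('m::{finite,linorder})" where
  "Amat = (\<chi> k c. case c of
       None \<Rightarrow> (if (\<forall>l. k \<le> l) then 1 else 0)
     | Some j \<Rightarrow> (if k = j then -1 else if is_succ j k then 1 else 0))"

definition Bmat :: "real \<Rightarrow> real \<Rightarrow> real^('m::{finite,linorder} option)^'n" where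
  "Bmat bL bU = (\<chi> i c. case c of
       None \<Rightarrow> bL
     | Some j \<Rightarrow> (if (\<forall>l. l \<le> j) then - bU else 0))"

definition Xtil :: "real^'p^'n \<Rightarrow> real^'p^'n" where
  "Xtil X = (1 / sqrt (real CARD('n))) *\<^sub>R X"

definition Dlam :: "real^'p \<Rightarrow> real^'p^'p" where
  "Dlam lam = (\<chi> i j. if i = j then lam $ i else 0)"

definition Gmat :: "real^'p^'n \<Rightarrow> real^'p \<Rightarrow> real^'n^'n" where
  "Gmat X lam = matrix_inv (Xtil X ** Dlam lam ** transpose (Xtil X) + mat 1)"

definition ones_mat :: "real^'n^'n" where
  "ones_mat = (\<chi> i j. 1)"

definition Yhat :: "real^'p^'n \<Rightarrow> real^'m^'n \<Rightarrow> real^'p \<Rightarrow> real^'m^'n" where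
  "Yhat X Y lam = (1 / real CARD('n)) *\<^sub>R (ones_mat ** Y) + Y - Gmat X lam ** Y"

definition feasible :: "real \<Rightarrow> real \<Rightarrow> real^('m::{finite,linorder})^'n \<Rightarrow> bool" where
  "feasible bL bU Q \<longleftrightarrow> (\<forall>i c. (Bmat bL bU - Q ** Amat) $ i $ c \<le> 0)"

definition Qhat :: "real^'p^'n \<Rightarrow> real^('m::{finite,linorder})^'n \<Rightarrow> real \<Rightarrow> real \<Rightarrow> real^'p
    \<Rightarrow> real^('m::{finite,linorder})^'n" where
  "Qhat X Y bL bU lam = (THE Q. is_arg_min (\<lambda>Q. (1/2) * (norm (Q - Yhat X Y lam))\<^sup>2)
                               (feasible bL bU) Q)"

text \<open>The norm on real^'m^'n is the Frobenius norm.\<close>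
definition fobj :: "real^'p^'n \<Rightarrow> real^('m::{finite,linorder})^'n \<Rightarrow> real \<Rightarrow> real \<Rightarrow> real^'p
    \<Rightarrow> real" where
  "fobj X Y bL bU lam = (1/2) * (norm (Qhat X Y bL bU lam - Y))\<^sup>2"

definition active :: "real^'p^'n \<Rightarrow> real^('m::{finite,linorder})^'n \<Rightarrow> real \<Rightarrow> real \<Rightarrow> real^'p
    \<Rightarrow> 'n \<Rightarrow> ('m::{finite,linorder}) option set" where
  "active X Y bL bU lam i = {c. (Bmat bL bU - Qhat X Y bL bU lam ** Amat) $ i $ c = 0}"

definition orth_proj :: "'a::euclidean_space set \<Rightarrow> 'a \<Rightarrow> 'a" where
  "orth_proj S x = (THE y. y \<in> span S \<and> (\<forall>z\<in>span S. inner (x - y) z = 0))"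

definition Pact :: "real^'p^'n \<Rightarrow> real^('m::{finite,linorder})^'n \<Rightarrow> real \<Rightarrow> real \<Rightarrow> real^'p
    \<Rightarrow> 'n \<Rightarrow> real^('m::{finite,linorder})^('m::{finite,linorder})" where
  "Pact X Y bL bU lam i =
     matrix (orth_proj ((\<lambda>c. column c Amat) ` active X Y bL bU lam i))"

definition outer :: "real^'a \<Rightarrow> real^'b \<Rightarrow> real^'b^'a" where
  "outer u v = (\<chi> a b. u $ a * v $ b)"

definition hadamard :: "real^'b^'a \<Rightarrow> real^'b^'a \<Rightarrow> real^'b^'a" where
  "hadamard M K = (\<chi> a b. M $ a $ b * K $ a $ b)"

definition diagv :: "real^'a^'a \<Rightarrow> real^'a" where
  "diagv M = (\<chi> k. M $ k $ k)"

definition Nmat :: "real^'p^'n \<Rightarrow> real^('m::{finite,linorder})^'n \<Rightarrow> real \<Rightarrow> real \<Rightarrow> real^'p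
    \<Rightarrow> real^'p^'p" where
  "Nmat X Y bL bU lam =
     (let G = Gmat X lam; Xt = Xtil X in
      transpose Xt ** G **
        (\<Sum>i\<in>UNIV. outer (axis i 1) (axis i 1) ** (Yhat X Y lam - Y) **
                     (mat 1 - Pact X Y bL bU lam i))
        ** transpose Y ** G ** Xt)"

definition gradf :: "real^'p^'n \<Rightarrow> real^('m::{finite,linorder})^'n \<Rightarrow> real \<Rightarrow> real \<Rightarrow> real^'p
    \<Rightarrow> real^'p" where
  "gradf X Y bL bU lam = diagv (Nmat X Y bL bU lam)"

definition hessf :: "real^'p^'n \<Rightarrow> real^('m::{finite,linorder})^'n \<Rightarrow> real \<Rightarrow> real \<Rightarrow> real^'p
    \<Rightarrow> real^'p^'p" where
  "hessf X Y bL bU lam =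
     (let G = Gmat X lam; Xt = Xtil X; N = Nmat X Y bL bU lam in
        hadamard (transpose Xt ** G ** Y ** transpose Y ** G ** Xt)
                 (transpose Xt ** G ** G ** Xt)
      - hadamard (transpose Xt ** G ** Xt) (N + transpose N)
      - (\<Sum>i\<in>UNIV. hadamard
           (transpose Xt ** G ** Y ** Pact X Y bL bU lam i ** transpose Y ** G ** Xt)
           (transpose Xt ** G ** outer (axis i 1) (axis i 1) ** G ** Xt)))"

end

theory Submission
  imports Defs
begin


lemma bb_mm: "bounded_bilinear ((**) :: real^'b::finite^'a::finite \<Rightarrow> real^'c::finite^'b \<Rightarrow> real^'c^'a)"
  unfolding bilinear_conv_bounded_bilinear[symmetric] bilinear_def
  by (auto intro!: linearI simp: matrix_add_ldistrib matrix_scalar_ac scalar_matrix_assoc)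
     (vector matrix_matrix_mult_def sum.distrib[symmetric] field_simps)

lemma mm_deriv:
  fixes f :: "'x::real_normed_vector \<Rightarrow> real^'b::finite^'a::finite" and g :: "'x \<Rightarrow> real^'c::finite^'b"
  assumes "(f has_derivative f') (at x within s)" "(g has_derivative g') (at x within s)"
  shows "((\<lambda>x. f x ** g x) has_derivative (\<lambda>h. f x ** g' h + f' h ** g x)) (at x within s)"
  using bounded_bilinear.FDERIV[OF bb_mm assms] .

lemma mm_add_r: "((A::real^'b::finite^'a::finite) + B) ** C = A ** C + B ** (C::real^'c::finite^'b)"
  using bounded_bilinear.add_left[OF bb_mm] .
lemma mm_diff_r: "((A::real^'b::finite^'a::finite) - B) ** C = A ** C - B ** (C::real^'c::finite^'b)"
  using bounded_bilinear.diff_left[OF bb_mm] .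
lemma mm_diff_l: "(A::real^'b::finite^'a::finite) ** (B - C) = A ** B - A ** (C::real^'c::finite^'b)"
  using bounded_bilinear.diff_right[OF bb_mm] .
lemma mm_minus_l: "(- A::real^'b::finite^'a::finite) ** B = - (A ** (B::real^'c::finite^'b))"
  using bounded_bilinear.minus_left[OF bb_mm] .
lemma mm_minus_r: "(A::real^'b::finite^'a::finite) ** (- B) = - (A ** (B::real^'c::finite^'b))"
  using bounded_bilinear.minus_right[OF bb_mm] .
lemma mm_sum_l: "(\<Sum>i\<in>S. (A i::real^'b::finite^'a::finite)) ** (C::real^'c::finite^'b) = (\<Sum>i\<in>S. A i ** C)"
  by (induction S rule: infinite_finite_induct) (auto simp: mm_add_r)
lemma mm_sum_r: "(C::real^'b::finite^'a::finite) ** (\<Sum>i\<in>S. (A i::real^'c::finite^'b)) = (\<Sum>i\<in>S. C ** A i)"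
  by (induction S rule: infinite_finite_induct) (auto simp: matrix_add_ldistrib)

lemma inv_props:
  fixes A :: "real^'n::finite^'n"
  assumes "invertible A"
  shows "A ** matrix_inv A = mat 1" "matrix_inv A ** A = mat 1"
  using someI_ex[OF assms[unfolded invertible_def]] unfolding matrix_inv_def by auto

lemma inv_sym:
  fixes A :: "real^'n::finite^'n"
  assumes "invertible A" "transpose A = A"
  shows "transpose (matrix_inv A) = matrix_inv A"
proof -
  let ?G = "matrix_inv A"
  have "transpose ?G ** A = mat 1"
    using inv_props(1)[OF assms(1)] by (metis assms(2) matrix_transpose_mul transpose_mat)
  then have "transpose ?G = transpose ?G ** (A ** ?G)" using inv_props[OF assms(1)] by simp
  also have "\<dots> = ?G" by (simp add: matrix_mul_assoc \<open>transpose ?G ** A = mat 1\<close>)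
  finally show ?thesis .
qed

lemma outer_nth[simp]: "outer u v $ a $ b = u $ a * v $ b"
  by (simp add: outer_def)
lemma mm_outer: "(A::real^'b::finite^'a::finite) ** outer u (v::real^'c::finite) = outer (A *v u) v"
  by (simp add: vec_eq_iff outer_def matrix_matrix_mult_def matrix_vector_mult_def sum_distrib_right mult.assoc)
lemma outer_mm: "outer u v ** (B::real^'c::finite^'b::finite) = outer (u::real^'a::finite) (v v* B)"
  by (simp add: vec_eq_iff outer_def matrix_matrix_mult_def vector_matrix_mult_def sum_distrib_left mult.assoc)
lemma vm_outer: "(x::real^'a::finite) v* outer u (v::real^'b::finite) = (inner x u) *s v"
  by (simp add: vec_eq_iff outer_def vector_matrix_mult_def inner_vec_def sum_distrib_right sum_distrib_left mult_ac)
lemma transpose_outer: "transpose (outer u v) = outer v u"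
  by (simp add: vec_eq_iff outer_def transpose_def)
lemma mm_entry: "((A::real^'b::finite^'a::finite) ** (B::real^'c::finite^'b)) $ k $ l = (A *v column l B) $ k"
  by (simp add: matrix_matrix_mult_def matrix_vector_mult_def column_def)
lemma tmm_entry: "(transpose (B::real^'a::finite^'b::finite) ** (A::real^'c::finite^'b)) $ l $ k = (column l B v* A) $ k"
  by (simp add: matrix_matrix_mult_def vector_matrix_mult_def column_def transpose_def)
lemma axis_vm: "axis i 1 v* (A::real^'b::finite^'a::finite) = A $ i"
  by (simp add: vec_eq_iff vector_matrix_mult_def axis_def if_distrib if_distribR cong: if_cong)
lemma mv_axis: "(A::real^'b::finite^'a::finite) *v axis j 1 = column j A"
  by (simp add: vec_eq_iff matrix_vector_mult_def axis_def column_def if_distrib if_distribR cong: if_cong)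

lemma trace_comm: "trace ((A::real^'b::finite^'a::finite) ** (B::real^'a^'b)) = trace (B ** A)"
  unfolding trace_def matrix_matrix_mult_def
  by (simp add: sum.swap[of _ "UNIV::'a set"] mult.commute)

lemma inner_trace: "inner (A::real^'b::finite^'a::finite) B = trace (A ** transpose B)"
  unfolding trace_def matrix_matrix_mult_def inner_vec_def transpose_def by simp

lemma inner_diagv: "inner (diagv N) h = trace (Dlam h ** N)"
  unfolding trace_def matrix_matrix_mult_def inner_vec_def diagv_def Dlam_def
  by (simp add: if_distrib if_distribR mult.commute cong: if_cong)

lemma sym_entry: "transpose A = A \<Longrightarrow> A $ l $ k = A $ k $ l"
  by (metis transpose_def vec_lambda_beta)




lemma det_cont:
  fixes M :: "'x::topological_space \<Rightarrow> real^'n::finite^'n"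
  assumes "continuous_on U M"
  shows "continuous_on U (\<lambda>y. det (M y))"
  unfolding det_def by (intro continuous_intros assms)

lemma cont_if_const: "continuous_on U f \<Longrightarrow> continuous_on U (\<lambda>x. if P then c else f x)"
  by (cases P) auto

lemma inv_cramer:
  fixes A :: "real^'n::finite^'n"
  assumes "invertible A"
  shows "matrix_inv A = (\<chi> k j. det (\<chi> a b. if b = k then axis j 1 $ a else A $ a $ b) / det A)"
proof -
  have d: "det A \<noteq> 0" using assms invertible_det_nz by blast
  have "matrix_inv A $ k $ j = det (\<chi> a b. if b = k then axis j 1 $ a else A $ a $ b) / det A" for k j
  proof -
    have "A *v (matrix_inv A *v axis j 1) = axis j 1"
      by (simp add: matrix_vector_mul_assoc inv_props[OF assms])
    then have e: "matrix_inv A *v axis j 1 = (\<chi> k. det(\<chi> i jj. if jj=k then axis j 1 $i else A$i$jj) / det A)"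
      by (simp only: cramer[OF d])
    have "matrix_inv A $ k $ j = (matrix_inv A *v axis j 1) $ k"
      by (simp add: mv_axis column_def)
    also have "\<dots> = det (\<chi> a b. if b = k then axis j 1 $ a else A $ a $ b) / det A"
      by (subst e) simp
    finally show ?thesis .
  qed
  then show ?thesis by (simp add: vec_eq_iff)
qed

lemma inv_cont:
  fixes M :: "'x::topological_space \<Rightarrow> real^'n::finite^'n"
  assumes "continuous_on U M" "\<forall>y\<in>U. invertible (M y)"
  shows "continuous_on U (\<lambda>y. matrix_inv (M y))"
proof -
  have "continuous_on U (\<lambda>y. (\<chi> k j. det (\<chi> a b. if b = k then axis j 1 $ a else M y $ a $ b) / det (M y)) :: real^'n^'n)"
    by (intro continuous_on_vec_lambda continuous_on_divide det_cont cont_if_const continuous_on_component assms(1))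
       (use assms(2) invertible_det_nz in blast)
  then show ?thesis
    by (rule continuous_on_cong[THEN iffD1, rotated -1]) (auto simp: inv_cramer assms(2))
qed

lemma inv_deriv:
  fixes L :: "real^'p::finite \<Rightarrow> real^'n::finite^'n"
  assumes L: "bounded_linear L" and U: "open U" "x \<in> U"
    and inv: "\<forall>y\<in>U. invertible (L y + C)"
  shows "((\<lambda>y. matrix_inv (L y + C)) has_derivative
          (\<lambda>h. - (matrix_inv (L x + C) ** L h ** matrix_inv (L x + C)))) (at x)"
proof -
  define G where "G y = matrix_inv (L y + C)" for y
  have cont: "continuous_on U G"
    unfolding G_def using inv
    by (intro inv_cont continuous_on_add linear_continuous_on L continuous_on_const) auto
  then have Gc: "(G \<longlongrightarrow> G x) (at x)"
    using U continuous_on_eq_continuous_at isCont_def by blast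
  have eq: "G y - G x = - (G y ** L (y - x) ** G x)" if "y \<in> U" for y
  proof -
    have "G y ** ((L x + C) - (L y + C)) ** G x = G y ** (L x + C) ** G x - G y ** (L y + C) ** G x"
      by (simp add: mm_diff_l mm_diff_r matrix_add_ldistrib mm_add_r)
    also have "\<dots> = G y - G x"
      using inv_props[of "L x + C"] inv_props[of "L y + C"] inv that U
      by (simp add: G_def matrix_mul_assoc[symmetric])
    finally show ?thesis
      by (simp add: linear_diff[OF bounded_linear.linear[OF L]] mm_diff_l mm_diff_r mm_minus_l mm_minus_r)
  qed
  obtain K where K: "K > 0" "\<And>a b. norm ((a::real^'n^'n) ** (b::real^'n^'n)) \<le> norm a * norm b * K"
    using bounded_bilinear.pos_bounded[OF bb_mm] by blast
  obtain KL where KL: "KL > 0" "\<And>v. norm (L v) \<le> norm v * KL"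
    using bounded_linear.pos_bounded[OF L] by blast
  have bl: "bounded_linear (\<lambda>h. - (G x ** L h ** G x))"
    using bounded_linear_minus[OF bounded_linear_compose[OF bounded_bilinear.bounded_linear_left[OF bb_mm]
          bounded_linear_compose[OF bounded_bilinear.bounded_linear_right[OF bb_mm] L]], of "G x" "G x"]
    by (simp add: o_def)
  have "((\<lambda>y. norm (G y - G x - - (G x ** L (y - x) ** G x)) / norm (y - x)) \<longlongrightarrow> 0) (at x)"
  proof (rule tendsto_0_le[where K = "K * KL * K * norm (G x)"])
    show "((\<lambda>y. G y - G x) \<longlongrightarrow> 0) (at x)" using Gc by (simp add: LIM_zero)
    have "eventually (\<lambda>y. y \<in> U) (at x)"
      using U eventually_at_topological by blast
    then show "\<forall>\<^sub>F y in at x. norm (norm (G y - G x - - (G x ** L (y - x) ** G x)) / norm (y - x))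
            \<le> norm (G y - G x) * (K * KL * K * norm (G x))"
    proof (rule eventually_mono)
      fix y assume y: "y \<in> U"
      have "- ((G y - G x) ** L (y - x) ** G x) = - (G y ** L (y - x) ** G x) + G x ** L (y - x) ** G x"
        by (simp add: mm_diff_r)
      also have "\<dots> = G y - G x + G x ** L (y - x) ** G x" using eq[OF y] by simp
      finally have "G y - G x - - (G x ** L (y - x) ** G x) = - ((G y - G x) ** L (y - x) ** G x)"
        by simp
      then have "norm (G y - G x - - (G x ** L (y - x) ** G x)) = norm ((G y - G x) ** L (y - x) ** G x)"
        by simp
      also have "\<dots> \<le> norm ((G y - G x) ** L (y - x)) * norm (G x) * K" by (rule K)
      also have "\<dots> \<le> (norm (G y - G x) * norm (L (y - x)) * K) * norm (G x) * K"
        using K by (intro mult_right_mono) auto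
      also have "\<dots> \<le> (norm (G y - G x) * (norm (y - x) * KL) * K) * norm (G x) * K"
        using K KL by (intro mult_right_mono mult_left_mono) auto
      finally have *: "norm (G y - G x - - (G x ** L (y - x) ** G x))
          \<le> norm (y - x) * (norm (G y - G x) * (K * KL * K * norm (G x)))"
        by (simp add: algebra_simps)
      show "norm (norm (G y - G x - - (G x ** L (y - x) ** G x)) / norm (y - x))
            \<le> norm (G y - G x) * (K * KL * K * norm (G x))"
      proof (cases "y = x")
        case True then show ?thesis using K by simp
      next
        case False
        then have "norm (y - x) > 0" by simp
        then show ?thesis using * by (simp add: divide_le_eq mult.commute)
      qed
    qed
  qed
  then show ?thesis
    unfolding G_def[symmetric] has_derivative_iff_norm using bl by simp
qed




lemma op_ex1: "\<exists>!y. y \<in> span S \<and> (\<forall>z\<in>span S. inner (x - y) z = 0)"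
  for S :: "'a::euclidean_space set"
proof -
  obtain y z where y: "y \<in> span S" "\<And>w. w \<in> span S \<Longrightarrow> orthogonal z w" "x = y + z"
    using orthogonal_subspace_decomp_exists by blast
  have ex: "y \<in> span S \<and> (\<forall>z\<in>span S. inner (x - y) z = 0)"
    using y by (auto simp: orthogonal_def)
  show ?thesis
  proof (rule ex1I[of _ y])
    show "y \<in> span S \<and> (\<forall>z\<in>span S. inner (x - y) z = 0)" by (rule ex)
    fix w assume w: "w \<in> span S \<and> (\<forall>z\<in>span S. inner (x - w) z = 0)"
    have d: "y - w \<in> span S" using y w span_diff by blast
    have "inner (y - w) (y - w) = inner (x - w) (y - w) - inner (x - y) (y - w)"
      by (simp add: inner_diff_left)
    also have "\<dots> = 0" using d w ex by simp
    finally show "w = y" by simp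
  qed
qed

lemma op_props:
  fixes S :: "'a::euclidean_space set"
  shows "orth_proj S x \<in> span S" "\<And>z. z \<in> span S \<Longrightarrow> inner (x - orth_proj S x) z = 0"
  using theI'[OF op_ex1[where S=S and x=x]] unfolding orth_proj_def by auto

lemma op_char:
  fixes S :: "'a::euclidean_space set"
  assumes "y \<in> span S" "\<And>z. z \<in> span S \<Longrightarrow> inner (x - y) z = 0"
  shows "orth_proj S x = y"
  using op_ex1[where S=S and x=x] op_props[where S=S and x=x] assms by blast

lemma op_linear: "linear (orth_proj (S::'a::euclidean_space set))"
proof (rule linearI)
  fix a b :: 'a
  show "orth_proj S (a + b) = orth_proj S a + orth_proj S b"
  proof (rule op_char)
    show "orth_proj S a + orth_proj S b \<in> span S" by (simp add: span_add op_props)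
    fix z assume z: "z \<in> span S"
    have "inner (a - orth_proj S a) z = 0" "inner (b - orth_proj S b) z = 0"
      using op_props(2)[OF z] by auto
    then show "inner (a + b - (orth_proj S a + orth_proj S b)) z = 0"
      by (simp add: inner_diff_left inner_add_left)
  qed
next
  fix c :: real and a :: 'a
  show "orth_proj S (c *\<^sub>R a) = c *\<^sub>R orth_proj S a"
  proof (rule op_char)
    show "c *\<^sub>R orth_proj S a \<in> span S" by (simp add: span_mul op_props)
    fix z assume "z \<in> span S"
    then have "inner (a - orth_proj S a) z = 0" by (rule op_props)
    then show "inner (c *\<^sub>R a - c *\<^sub>R orth_proj S a) z = 0"
      by (metis inner_scaleR_left mult_zero_right scaleR_right_diff_distrib)
  qed
qed

lemma op_self: "x \<in> span S \<Longrightarrow> orth_proj S x = x" for S :: "'a::euclidean_space set"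
  by (rule op_char) auto

lemma op_zero:
  fixes S :: "'a::euclidean_space set"
  assumes "\<And>z. z \<in> S \<Longrightarrow> inner x z = 0"
  shows "orth_proj S x = 0"
proof (rule op_char)
  fix z assume "z \<in> span S"
  then have "orthogonal x z" using orthogonal_to_span assms unfolding orthogonal_def by blast
  then show "inner (x - 0) z = 0" by (simp add: orthogonal_def)
qed (simp add: span_zero)

lemma op_orth: "z \<in> span S \<Longrightarrow> inner (x - orth_proj S x) z = 0" for S :: "'a::euclidean_space set"
  by (rule op_props(2))

lemma op_sym: "inner (orth_proj S u) v = inner u (orth_proj S v)" for S :: "'a::euclidean_space set"
proof -
  have a: "inner (v - orth_proj S v) (orth_proj S u) = 0" by (rule op_orth[OF op_props(1)])
  have b: "inner (u - orth_proj S u) (orth_proj S v) = 0" by (rule op_orth[OF op_props(1)])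
  have "inner (orth_proj S u) v = inner (orth_proj S u) (orth_proj S v) + inner (v - orth_proj S v) (orth_proj S u)"
    by (simp add: inner_diff_left inner_diff_right inner_commute[of _ "orth_proj S u"])
  moreover have "inner u (orth_proj S v) = inner (orth_proj S u) (orth_proj S v) + inner (u - orth_proj S u) (orth_proj S v)"
    by (simp add: inner_diff_left)
  ultimately show ?thesis using a b by simp
qed

lemma in_span_iff_orth:
  fixes S :: "'a::euclidean_space set"
  assumes "\<And>d. (\<And>z. z \<in> S \<Longrightarrow> inner d z = 0) \<Longrightarrow> inner x d = 0"
  shows "x \<in> span S"
proof -
  let ?d = "x - orth_proj S x"
  have "\<And>z. z \<in> S \<Longrightarrow> inner ?d z = 0" using op_orth span_base by blast
  then have "inner x ?d = 0" using assms by blast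
  moreover have "inner ?d (orth_proj S x) = 0" by (rule op_orth[OF op_props(1)])
  ultimately have "inner ?d ?d = 0" by (simp add: inner_diff_left inner_commute)
  then have "x = orth_proj S x" by simp
  then show ?thesis using op_props(1) by metis
qed

lemma opm_mult: "matrix (orth_proj (S::(real^'m::finite) set)) *v x = orth_proj S x"
  using matrix_vector_mul(2)[OF op_linear[of S]] by metis

lemma opm_sym: "transpose (matrix (orth_proj (S::(real^'m::finite) set))) = matrix (orth_proj S)"
proof -
  have "orth_proj S (axis j 1) $ i = orth_proj S (axis i 1) $ j" for i j :: 'm
    using op_sym[of S "axis j 1" "axis i 1"] by (simp add: inner_axis inner_axis' inner_commute)
  then show ?thesis by (simp add: vec_eq_iff transpose_def matrix_def)
qed

lemma opm_vm: "x v* matrix (orth_proj (S::(real^'m::finite) set)) = orth_proj S x"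
  by (metis opm_mult opm_sym transpose_matrix_vector)




lemma QA_entry: "((Q::real^('m::{finite,linorder})^('n::finite)) ** Amat) $ i $ c = inner (Q $ i) (column c Amat)"
  by (simp add: matrix_matrix_mult_def inner_vec_def column_def)

lemma min_iff: "(\<forall>l. k \<le> l) \<longleftrightarrow> k = Min (UNIV::'m::{finite,linorder} set)"
proof
  assume "\<forall>l. k \<le> l"
  then have "k \<le> Min UNIV" by blast
  moreover have "Min UNIV \<le> k" by simp
  ultimately show "k = Min UNIV" by (rule antisym)
next
  assume "k = Min UNIV"
  then show "\<forall>l. k \<le> l" by simp
qed

lemma sumA_None: "(\<Sum>k\<in>UNIV. (Amat::real^('m option)^('m::{finite,linorder})) $ k $ None) = 1"
  by (simp add: Amat_def min_iff)

lemma succ_iff: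
  assumes "j < (l::'m::{finite,linorder})"
  shows "is_succ j k \<longleftrightarrow> k = Min {l. j < l}"
proof -
  have ne: "{l. j < l} \<noteq> {}" using assms by blast
  have fin: "finite {l. j < l}" by simp
  have m: "j < Min {l. j < l}" using Min_in[OF fin ne] by simp
  show ?thesis
    unfolding is_succ_def
  proof
    assume k: "j < k \<and> (\<forall>l. j < l \<longrightarrow> k \<le> l)"
    then have "Min {l. j < l} \<le> k" using Min_le[OF fin] by simp
    moreover have "k \<le> Min {l. j < l}" using k m by blast
    ultimately show "k = Min {l. j < l}" by simp
  next
    assume "k = Min {l. j < l}"
    then show "j < k \<and> (\<forall>l. j < l \<longrightarrow> k \<le> l)" using m Min_le[OF fin] by simp
  qed
qed

lemma sumA_Some: "(\<Sum>k\<in>UNIV. (Amat::real^('m option)^('m::{finite,linorder})) $ k $ Some j)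
    = (if (\<forall>l. l \<le> j) then -1 else 0)"
proof (cases "\<forall>l. l \<le> j")
  case True
  then have "\<not> is_succ j k" for k by (simp add: is_succ_def not_less)
  then have "(\<Sum>k\<in>UNIV. (Amat $ k $ Some j :: real)) = (\<Sum>k\<in>UNIV. if k = j then -1 else 0)"
    by (intro sum.cong) (auto simp: Amat_def)
  then show ?thesis using True by simp
next
  case False
  then obtain l where l: "j < l" by (auto simp: not_le)
  let ?s = "Min {l. j < l}"
  have sj: "?s \<noteq> j" using succ_iff[OF l, of ?s] by (auto simp: is_succ_def)
  have "(\<Sum>k\<in>UNIV. (Amat $ k $ Some j :: real))
      = (\<Sum>k\<in>UNIV. (if k = j then -1 else 0) + (if k = ?s then 1 else 0))"
    by (rule sum.cong) (use sj in \<open>auto simp: Amat_def succ_iff[OF l]\<close>)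
  also have "\<dots> = 0" by (simp add: sum.distrib)
  finally show ?thesis using False by simp
qed

lemma feasible_const:
  assumes "bL \<le> bU"
  shows "feasible bL bU ((\<chi> i k. bL) :: real^('m::{finite,linorder})^('n::finite))"
proof -
  have e: "(((\<chi> i k. bL) :: real^('m::{finite,linorder})^('n::finite)) ** Amat) $ i $ c = bL * (\<Sum>k\<in>UNIV. (Amat $ k $ c :: real))" for i c
    by (simp add: matrix_matrix_mult_def sum_distrib_left)
  show ?thesis
    unfolding feasible_def
  proof (intro allI)
    fix i c
    show "(Bmat bL bU - ((\<chi> i k. bL) :: real^('m::{finite,linorder})^('n::finite)) ** Amat) $ i $ c \<le> 0"
      using assms by (cases c) (auto simp: e sumA_None sumA_Some Bmat_def)
  qed
qed

lemma feasible_closed: "closed {Q::real^('m::{finite,linorder})^('n::finite). feasible bL bU Q}"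
  unfolding feasible_def
proof (intro closed_Collect_all closed_Collect_le)
  fix i c
  have bl: "bounded_linear (\<lambda>Q::real^('m::{finite,linorder})^('n::finite). Q ** Amat)"
    by (rule bounded_bilinear.bounded_linear_left[OF bb_mm])
  show "continuous_on UNIV (\<lambda>Q::real^('m::{finite,linorder})^('n::finite). (Bmat bL bU - Q ** Amat) $ i $ c)"
    by (intro continuous_intros linear_continuous_on bl)
qed (simp add: continuous_on_const)

lemma feasible_convex: "convex {Q::real^('m::{finite,linorder})^('n::finite). feasible bL bU Q}"
proof (rule convexI)
  fix x y :: "real^('m::{finite,linorder})^('n::finite)" and u v :: real
  assume x: "x \<in> {Q. feasible bL bU Q}" and y: "y \<in> {Q. feasible bL bU Q}"
    and uv: "0 \<le> u" "0 \<le> v" "u + v = 1"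
  have eq: "Bmat bL bU - (u *\<^sub>R x + v *\<^sub>R y) ** Amat
      = u *\<^sub>R (Bmat bL bU - x ** Amat) + v *\<^sub>R (Bmat bL bU - y ** Amat)"
  proof -
    have "Bmat bL bU = u *\<^sub>R Bmat bL bU + v *\<^sub>R Bmat bL bU"
      using uv by (metis scaleR_add_left scaleR_one)
    then show ?thesis
      by (simp add: mm_add_r scalar_matrix_assoc[symmetric] algebra_simps)
  qed
  show "u *\<^sub>R x + v *\<^sub>R y \<in> {Q. feasible bL bU Q}"
    using x y uv unfolding feasible_def mem_Collect_eq eq
    by (auto intro!: add_nonpos_nonpos mult_nonneg_nonpos)
qed

context
  fixes X :: "real^'p::finite^'n::finite" and Y :: "real^('m::{finite,linorder})^('n::finite)"
    and bL bU :: real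
  assumes bLU: "bL \<le> bU"
begin

lemma Qhat_cp: "Qhat X Y bL bU l = closest_point {Q. feasible bL bU Q} (Yhat X Y l)"
proof -
  let ?F = "{Q::real^('m::{finite,linorder})^('n::finite). feasible bL bU Q}"
  let ?y = "Yhat X Y l"
  let ?c = "closest_point ?F ?y"
  have ne: "?F \<noteq> {}" using feasible_const[OF bLU] by blast
  have cin: "?c \<in> ?F" and cle: "\<forall>z\<in>?F. dist ?y ?c \<le> dist ?y z"
    using closest_point_exists[OF feasible_closed ne] by auto
  have am: "is_arg_min (\<lambda>Q. (1/2) * (norm (Q - ?y))\<^sup>2) (feasible bL bU) ?c"
    unfolding is_arg_min_def
  proof (intro conjI notI)
    show "feasible bL bU ?c" using cin by simp
    assume "\<exists>z. feasible bL bU z \<and> (1/2) * (norm (z - ?y))\<^sup>2 < (1/2) * (norm (?c - ?y))\<^sup>2"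
    then obtain z where z: "feasible bL bU z" "(norm (z - ?y))\<^sup>2 < (norm (?c - ?y))\<^sup>2" by auto
    then have "norm (z - ?y) < norm (?c - ?y)" using power_less_imp_less_base norm_ge_zero by blast
    moreover have "dist ?y ?c \<le> dist ?y z" using cle z by simp
    ultimately show False by (simp add: dist_norm norm_minus_commute)
  qed
  show ?thesis
    unfolding Qhat_def
  proof (rule the_equality)
    show "is_arg_min (\<lambda>Q. (1/2) * (norm (Q - ?y))\<^sup>2) (feasible bL bU) ?c" by (rule am)
    fix Q assume Q: "is_arg_min (\<lambda>Q. (1/2) * (norm (Q - ?y))\<^sup>2) (feasible bL bU) Q"
    then have Qf: "Q \<in> ?F" by (simp add: is_arg_min_def)
    have "\<forall>z\<in>?F. dist ?y Q \<le> dist ?y z"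
    proof
      fix z assume "z \<in> ?F"
      then have "\<not> (1/2) * (norm (z - ?y))\<^sup>2 < (1/2) * (norm (Q - ?y))\<^sup>2"
        using Q by (simp add: is_arg_min_def)
      then have nl: "\<not> (norm (z - ?y))\<^sup>2 < (norm (Q - ?y))\<^sup>2" by simp
      have "norm (Q - ?y) \<le> norm (z - ?y)"
      proof (rule ccontr)
        assume "\<not> norm (Q - ?y) \<le> norm (z - ?y)"
        then have "norm (z - ?y) < norm (Q - ?y)" by simp
        then have "(norm (z - ?y))\<^sup>2 < (norm (Q - ?y))\<^sup>2"
          by (intro power_strict_mono) auto
        then show False using nl by simp
      qed
      then show "dist ?y Q \<le> dist ?y z" by (simp add: dist_norm norm_minus_commute)
    qed
    then show "Q = ?c" using closest_point_unique[OF feasible_convex feasible_closed Qf] by blast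
  qed
qed

lemma Qhat_feas: "feasible bL bU (Qhat X Y bL bU l)"
  using closest_point_in_set[OF feasible_closed, of bL bU] feasible_const[OF bLU]
  unfolding Qhat_cp by blast

lemma Qhat_vi: "feasible bL bU Z \<Longrightarrow> inner (Yhat X Y l - Qhat X Y bL bU l) (Z - Qhat X Y bL bU l) \<le> 0"
  unfolding Qhat_cp using closest_point_dot[OF feasible_convex feasible_closed] by blast

end




lemma inner_rowE: "inner (Z::real^'m::finite^'n::finite) (\<chi> a. if a = i then d else 0) = inner (Z $ i) d"
proof -
  have "inner Z (\<chi> a. if a = i then d else 0) = (\<Sum>a\<in>UNIV. inner (Z $ a) ((\<chi> a. if a = i then d else 0) $ a))"
    by (rule inner_vec_def)
  also have "\<dots> = (\<Sum>a\<in>UNIV. if a = i then inner (Z $ a) d else 0)"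
    by (intro sum.cong) auto
  finally show ?thesis by simp
qed

lemma row_span:
  fixes Qh Yh :: "real^('m::{finite,linorder})^('n::finite)"
  assumes feas: "feasible bL bU Qh"
    and vi: "\<And>Z. feasible bL bU Z \<Longrightarrow> inner (Yh - Qh) (Z - Qh) \<le> 0"
  shows "(Qh - Yh) $ i \<in> span ((\<lambda>c. column c Amat) ` {c. (Bmat bL bU - Qh ** Amat) $ i $ c = 0})"
proof (rule in_span_iff_orth)
  let ?S = "(\<lambda>c. column c Amat) ` {c. (Bmat bL bU - Qh ** Amat) $ i $ c = 0}"
  fix d assume hd: "\<And>z. z \<in> ?S \<Longrightarrow> inner d z = 0"
  define v where "v c = (Bmat bL bU - Qh ** Amat) $ i $ c" for c
  define w where "w c = inner d (column c Amat)" for c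
  have act: "v c = 0 \<Longrightarrow> w c = 0" for c using hd[of "column c Amat"] by (auto simp: v_def w_def)
  have vle: "v c \<le> 0" for c using feas by (simp add: feasible_def v_def)
  define E :: "real^('m::{finite,linorder})^('n::finite)" where "E = (\<chi> a. if a = i then d else 0)"
  define \<mu> where "\<mu> = Min (insert 1 ((\<lambda>c. - v c) ` {c. v c < 0}))"
  define K where "K = 1 + (\<Sum>c\<in>UNIV. \<bar>w c\<bar>)"
  have Kpos: "K > 0" unfolding K_def by (smt (verit) sum_nonneg abs_ge_zero)
  have wK: "\<bar>w c\<bar> \<le> K" for c
    unfolding K_def using member_le_sum[of c UNIV "\<lambda>c. \<bar>w c\<bar>"] by simp
  have mupos: "\<mu> > 0" unfolding \<mu>_def by (subst Min_gr_iff) auto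
  have mule: "v c < 0 \<Longrightarrow> \<mu> \<le> - v c" for c unfolding \<mu>_def by (intro Min_le) auto
  define t0 where "t0 = \<mu> / (2 * K)"
  have t0pos: "t0 > 0" using mupos Kpos by (simp add: t0_def)
  have feasZ: "feasible bL bU (Qh + t *\<^sub>R E)" if t: "\<bar>t\<bar> \<le> t0" for t
    unfolding feasible_def
  proof (intro allI)
    fix a c
    have ent: "((Qh + t *\<^sub>R E) ** Amat) $ a $ c
        = (Qh ** Amat) $ a $ c + t * (if a = i then w c else 0)" for a c
      by (simp add: QA_entry E_def w_def inner_add_left)
    show "(Bmat bL bU - (Qh + t *\<^sub>R E) ** Amat) $ a $ c \<le> 0"
    proof (cases "a = i")
      case False then show ?thesis using feas by (simp add: ent feasible_def)
    next
      case True
      show ?thesis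
      proof (cases "v c = 0")
        case True then show ?thesis using act[of c] \<open>a = i\<close> by (simp add: ent v_def)
      next
        case False
        then have vc: "v c < 0" using vle[of c] by simp
        have "\<bar>t * w c\<bar> \<le> t0 * K"
          unfolding abs_mult using t wK[of c] by (intro mult_mono) auto
        also have "\<dots> = \<mu> / 2" using Kpos by (simp add: t0_def)
        finally have "\<bar>t * w c\<bar> \<le> \<mu> / 2" .
        then have m2: "- (t * w c) \<le> \<mu> / 2" by (rule abs_le_D2)
        have vv: "v c = Bmat bL bU $ i $ c - (Qh ** Amat) $ i $ c" by (simp add: v_def)
        show ?thesis using mule[OF vc] mupos \<open>a = i\<close> m2 vv by (simp add: ent)
      qed
    qed
  qed
  have "inner (Yh - Qh) ((Qh + t0 *\<^sub>R E) - Qh) \<le> 0" by (rule vi[OF feasZ]) (use t0pos in simp)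
  moreover have "inner (Yh - Qh) ((Qh + (- t0) *\<^sub>R E) - Qh) \<le> 0" by (rule vi[OF feasZ]) (use t0pos in simp)
  ultimately have 1: "t0 * inner (Yh - Qh) E \<le> 0" and 2: "- t0 * inner (Yh - Qh) E \<le> 0"
    by simp_all
  have "inner (Yh - Qh) E \<le> 0" using 1 t0pos by (simp add: mult_le_0_iff)
  moreover have "inner (Yh - Qh) E \<ge> 0" using 2 t0pos by (simp add: zero_le_mult_iff)
  ultimately have "inner (Yh - Qh) E = 0" by simp
  then have "inner ((Yh - Qh) $ i) d = 0" by (simp add: E_def inner_rowE)
  moreover have "inner ((Qh - Yh) $ i) d = - inner ((Yh - Qh) $ i) d" by (simp add: inner_diff_left)
  ultimately show "inner ((Qh - Yh) $ i) d = 0" by simp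
qed

lemma row_formula:
  fixes Qh0 Qh1 Yh0 Yh1 :: "real^('m::{finite,linorder})^('n::finite)"
  assumes feas1: "feasible bL bU Qh1"
    and vi1: "\<And>Z. feasible bL bU Z \<Longrightarrow> inner (Yh1 - Qh1) (Z - Qh1) \<le> 0"
    and act: "{c. (Bmat bL bU - Qh1 ** Amat) $ i $ c = 0} = {c. (Bmat bL bU - Qh0 ** Amat) $ i $ c = 0}"
  shows "Qh1 $ i = Qh0 $ i + (Yh1 $ i - Qh0 $ i)
     - orth_proj ((\<lambda>c. column c Amat) ` {c. (Bmat bL bU - Qh0 ** Amat) $ i $ c = 0}) (Yh1 $ i - Qh0 $ i)"
proof -
  let ?S = "(\<lambda>c. column c Amat) ` {c. (Bmat bL bU - Qh0 ** Amat) $ i $ c = 0}"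
  let ?P = "orth_proj ?S"
  have b: "(Qh1 - Yh1) $ i \<in> span ?S" using row_span[OF feas1 vi1, of i] by (simp only: act)
  have a0: "?P (Qh1 $ i - Qh0 $ i) = 0"
  proof (rule op_zero)
    fix z assume "z \<in> ?S"
    then obtain c where c: "z = column c Amat" "(Bmat bL bU - Qh0 ** Amat) $ i $ c = 0" by auto
    then have "(Bmat bL bU - Qh1 ** Amat) $ i $ c = 0" using act by blast
    then have "(Qh1 ** Amat) $ i $ c = (Qh0 ** Amat) $ i $ c" using c by simp
    then show "inner (Qh1 $ i - Qh0 $ i) z = 0" by (simp add: QA_entry c inner_diff_left)
  qed
  have "Qh1 $ i - Qh0 $ i = (Yh1 $ i - Qh0 $ i) + (Qh1 - Yh1) $ i" by simp
  then have "?P (Qh1 $ i - Qh0 $ i) = ?P (Yh1 $ i - Qh0 $ i) + (Qh1 - Yh1) $ i"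
    using linear_add[OF op_linear[of ?S]] op_self[OF b] by metis
  then have "(Qh1 - Yh1) $ i = - ?P (Yh1 $ i - Qh0 $ i)" using a0 by (simp add: add_eq_0_iff)
  then show ?thesis by (simp add: algebra_simps)
qed




lemma Dlam_linear: "bounded_linear (Dlam :: real^'p::finite \<Rightarrow> real^'p^'p)"
  by (intro linear_conv_bounded_linear[THEN iffD1] linearI) (auto simp: Dlam_def vec_eq_iff)

lemma Dlam_sym: "transpose (Dlam h) = Dlam h"
  by (simp add: Dlam_def transpose_def vec_eq_iff)

lemma Lh_linear: "bounded_linear (\<lambda>h. (Xt::real^'p::finite^'n::finite) ** Dlam h ** transpose Xt)"
  using bounded_linear_compose[OF bounded_bilinear.bounded_linear_left[OF bb_mm]
      bounded_linear_compose[OF bounded_bilinear.bounded_linear_right[OF bb_mm] Dlam_linear], of Xt "transpose Xt"]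
  by (simp add: o_def)

lemma Lh_sym: "transpose ((Xt::real^'p::finite^'n::finite) ** Dlam h ** transpose Xt) = Xt ** Dlam h ** transpose Xt"
  by (simp add: matrix_transpose_mul Dlam_sym matrix_mul_assoc)

lemma grad_trace:
  fixes Xt :: "real^'p::finite^'n::finite" and G :: "real^'n^'n" and R Y :: "real^'m::finite^'n"
  assumes Gs: "transpose G = G"
  shows "inner (diagv (transpose Xt ** G ** R ** transpose Y ** G ** Xt)) h
       = inner R (G ** (Xt ** Dlam h ** transpose Xt) ** G ** Y)"
proof -
  have "inner (diagv (transpose Xt ** G ** R ** transpose Y ** G ** Xt)) h
      = trace ((Dlam h ** transpose Xt ** G) ** (R ** transpose Y ** G ** Xt))"
    by (simp add: inner_diagv matrix_mul_assoc)
  also have "\<dots> = trace ((R ** transpose Y ** G ** Xt) ** (Dlam h ** transpose Xt ** G))"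
    by (rule trace_comm)
  also have "\<dots> = trace (R ** transpose (G ** (Xt ** Dlam h ** transpose Xt) ** G ** Y))"
    by (simp add: matrix_transpose_mul Gs Dlam_sym matrix_mul_assoc)
  also have "\<dots> = inner R (G ** (Xt ** Dlam h ** transpose Xt) ** G ** Y)"
    by (simp add: inner_trace)
  finally show ?thesis .
qed

lemma outer_axis_mm: "outer (axis i 1) (axis i 1) ** (Z::real^'m::finite^'n::finite) = outer (axis i 1) (Z $ i)"
  by (simp add: outer_mm axis_vm)

lemma sum_rows:
  fixes Z :: "real^'m::finite^'n::finite" and M :: "'n \<Rightarrow> real^'m^'m"
  shows "(\<Sum>i\<in>UNIV. outer (axis i 1) (axis i 1) ** Z ** M i) = (\<chi> i. Z $ i v* M i)"
proof -
  have "(\<Sum>i\<in>UNIV. outer (axis i 1) (axis i 1) ** Z ** M i) $ a $ b = (Z $ a v* M a) $ b" for a b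
  proof -
    have "(\<Sum>i\<in>UNIV. outer (axis i 1) (axis i 1) ** Z ** M i) $ a $ b
        = (\<Sum>i\<in>UNIV. (if a = i then (Z $ i v* M i) $ b else 0))"
      by (simp only: outer_axis_mm axis_vm outer_mm sum_component outer_nth) (simp add: axis_def if_distrib if_distribR cong: if_cong)
    also have "\<dots> = (Z $ a v* M a) $ b" by simp
    finally show ?thesis .
  qed
  then show ?thesis by (simp add: vec_eq_iff)
qed




lemma outer3: "((P::real^'b::finite^'a::finite) ** outer u v ** (Q::real^'d::finite^'c::finite)) $ k $ j
   = (P *v u) $ k * (v v* Q) $ j"
  by (simp add: mm_outer outer_mm)

lemma outer_mv: "outer u v *v x = (inner v x) *s (u::real^'a::finite)"
  by (simp add: vec_eq_iff outer_def matrix_vector_mult_def inner_vec_def sum_distrib_left mult_ac)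

lemma outer5: "((P::real^'b::finite^'a::finite) ** outer a b ** (M::real^'d::finite^'c::finite) ** outer c (d::real^'e::finite)
     ** (Q::real^'f::finite^'e)) $ k $ j = (P *v a) $ k * inner (b v* M) c * (d v* Q) $ j"
  by (simp add: mm_outer outer_mm vm_outer outer_mv scalar_vector_matrix_assoc)

lemma col_mv: "((P::real^'b::finite^'a::finite) *v column l (B::real^'c::finite^'b)) $ k = (P ** B) $ k $ l"
  by (simp add: mm_entry)

lemma col_vm: "(column l (B::real^'a::finite^'b::finite) v* (Q::real^'c::finite^'b)) $ k = (transpose B ** Q) $ l $ k"
  by (simp add: tmm_entry)

lemma transpose_col: "(transpose (Xt::real^'p::finite^'n::finite)) $ l = column l Xt"
  by (simp add: transpose_def column_def vec_eq_iff)

lemma Dlam_outer: "Dlam h = (\<Sum>l\<in>UNIV. h $ l *\<^sub>R outer (axis l 1) (axis l (1::real)))"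
proof -
  have "(\<Sum>l\<in>UNIV. h $ l *\<^sub>R outer (axis l 1) (axis l (1::real))) $ i $ j = (\<Sum>l\<in>UNIV. if l = i then (if i = j then h $ l else 0) else 0)" for i j
    by (simp only: sum_component) (intro sum.cong refl, auto simp: axis_def)
  then show ?thesis by (auto simp: vec_eq_iff Dlam_def)
qed

lemma mm_scale_l: "(c *\<^sub>R (A::real^'b::finite^'a::finite)) ** (B::real^'c::finite^'b) = c *\<^sub>R (A ** B)"
  by (simp add: scalar_matrix_assoc)
lemma mm_scale_r: "(A::real^'b::finite^'a::finite) ** (c *\<^sub>R (B::real^'c::finite^'b)) = c *\<^sub>R (A ** B)"
  by (simp add: matrix_scalar_ac scalar_matrix_assoc)

lemma L_outer: "(Xt::real^'p::finite^'n::finite) ** Dlam h ** transpose Xt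
    = (\<Sum>l\<in>UNIV. h $ l *\<^sub>R outer (column l Xt) (column l Xt))"
proof -
  have "Xt ** Dlam h ** transpose Xt = (\<Sum>l\<in>UNIV. Xt ** (h $ l *\<^sub>R outer (axis l 1) (axis l 1)) ** transpose Xt)"
    by (subst Dlam_outer) (simp only: mm_sum_r mm_sum_l)
  also have "\<dots> = (\<Sum>l\<in>UNIV. h $ l *\<^sub>R outer (column l Xt) (column l Xt))"
    by (intro sum.cong refl)
       (simp only: mm_scale_r mm_scale_l mm_outer outer_mm mv_axis axis_vm transpose_col)
  finally show ?thesis .
qed




lemma transpose_add': "transpose (A + B) = transpose A + transpose (B::real^'a::finite^'b::finite)"
  by (simp add: transpose_def vec_eq_iff)

context
  fixes X :: "real^'p::finite^'n::finite" and Y :: "real^('m::{finite,linorder})^('n::finite)"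
    and bL bU :: real and U :: "(real^'p) set" and lam :: "real^'p"
  assumes bLU: "bL < bU" and U_open: "open U" and lam_in: "lam \<in> U"
    and invert: "\<forall>l\<in>U. invertible (Xtil X ** Dlam l ** transpose (Xtil X) + mat 1)"
    and act_const: "\<forall>l\<in>U. \<forall>i. active X Y bL bU l i = active X Y bL bU lam i"
begin

definition "Ssx i = (\<lambda>c. column c Amat) ` active X Y bL bU lam i"
definition "Psi Z = (\<chi> i. Z $ i - orth_proj (Ssx i) (Z $ i))"

lemma Psi_linear: "linear Psi"
proof (rule linearI)
  fix a b :: "real^('m::{finite,linorder})^('n::finite)" and c :: real
  show "Psi (a + b) = Psi a + Psi b"
    by (simp add: Psi_def vec_eq_iff linear_add[OF op_linear])
  show "Psi (c *\<^sub>R a) = c *\<^sub>R Psi a"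
    by (simp add: Psi_def vec_eq_iff linear_scale[OF op_linear] algebra_simps)
qed

lemma Psi_bl: "bounded_linear Psi"
  using Psi_linear linear_conv_bounded_linear by blast

lemma Psi_sym: "inner Z (Psi V) = inner (Psi Z) V"
  unfolding inner_vec_def[of Z] inner_vec_def[of "Psi Z"]
  by (simp add: Psi_def inner_diff_left inner_diff_right op_sym)

lemma Psi_span: "(\<And>i. Z $ i \<in> span (Ssx i)) \<Longrightarrow> Psi Z = 0"
  by (simp add: Psi_def vec_eq_iff op_self)

lemma Pact_eq: "l \<in> U \<Longrightarrow> Pact X Y bL bU l i = matrix (orth_proj (Ssx i))"
  using act_const by (simp add: Pact_def Ssx_def)

lemma S_eq: "l \<in> U \<Longrightarrow> (\<Sum>i\<in>UNIV. outer (axis i 1) (axis i 1) ** Z ** (mat 1 - Pact X Y bL bU l i)) = Psi Z"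
  by (simp add: sum_rows Pact_eq Psi_def vector_matrix_mult_diff_rdistrib opm_vm)

lemma Qfeas: "feasible bL bU (Qhat X Y bL bU l)"
  by (rule Qhat_feas) (use bLU in simp)

lemma Qvi: "feasible bL bU Z \<Longrightarrow> inner (Yhat X Y l - Qhat X Y bL bU l) (Z - Qhat X Y bL bU l) \<le> 0"
  by (rule Qhat_vi) (use bLU in simp)+

lemma Qhat_form: "l \<in> U \<Longrightarrow> Qhat X Y bL bU l = Qhat X Y bL bU lam + Psi (Yhat X Y l - Qhat X Y bL bU lam)"
proof -
  assume l: "l \<in> U"
  have "Qhat X Y bL bU l $ i = (Qhat X Y bL bU lam + Psi (Yhat X Y l - Qhat X Y bL bU lam)) $ i" for i
  proof -
    have act: "{c. (Bmat bL bU - Qhat X Y bL bU l ** Amat) $ i $ c = 0} = {c. (Bmat bL bU - Qhat X Y bL bU lam ** Amat) $ i $ c = 0}"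
      using act_const l by (simp add: active_def)
    show ?thesis
      using row_formula[OF Qfeas Qvi act]
      by (simp add: Psi_def Ssx_def active_def)
  qed
  then show ?thesis by (simp add: vec_eq_iff)
qed

lemma Qhat_Yhat: "l \<in> U \<Longrightarrow> Psi (Qhat X Y bL bU l - Yhat X Y l) = 0"
proof (rule Psi_span)
  fix i assume l: "l \<in> U"
  have act: "{c. (Bmat bL bU - Qhat X Y bL bU l ** Amat) $ i $ c = 0} = active X Y bL bU lam i"
    using act_const l by (simp add: active_def)
  show "(Qhat X Y bL bU l - Yhat X Y l) $ i \<in> span (Ssx i)"
    using row_span[OF Qfeas Qvi, of l i] by (simp only: act Ssx_def)
qed

lemma G_sym: "l \<in> U \<Longrightarrow> transpose (Gmat X l) = Gmat X l"
  unfolding Gmat_def using invert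
  by (intro inv_sym) (auto simp: transpose_add' Lh_sym)

lemma G_deriv: "l \<in> U \<Longrightarrow> (Gmat X has_derivative
     (\<lambda>h. - (Gmat X l ** (Xtil X ** Dlam h ** transpose (Xtil X)) ** Gmat X l))) (at l)"
proof -
  assume l: "l \<in> U"
  have "((\<lambda>y. matrix_inv (Xtil X ** Dlam y ** transpose (Xtil X) + mat 1)) has_derivative
     (\<lambda>h. - (matrix_inv (Xtil X ** Dlam l ** transpose (Xtil X) + mat 1) ** (Xtil X ** Dlam h ** transpose (Xtil X))
        ** matrix_inv (Xtil X ** Dlam l ** transpose (Xtil X) + mat 1)))) (at l)"
    by (rule inv_deriv[OF Lh_linear U_open l invert])
  moreover have "(\<lambda>y. matrix_inv (Xtil X ** Dlam y ** transpose (Xtil X) + mat 1)) = Gmat X"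
    by (simp add: fun_eq_iff Gmat_def)
  ultimately show ?thesis by (simp add: Gmat_def)
qed

lemma Yhat_deriv: "l \<in> U \<Longrightarrow> ((\<lambda>l. Yhat X Y l) has_derivative
     (\<lambda>h. Gmat X l ** (Xtil X ** Dlam h ** transpose (Xtil X)) ** Gmat X l ** Y)) (at l)"
proof -
  assume l: "l \<in> U"
  have "((\<lambda>l. (1 / real CARD('n)) *\<^sub>R (ones_mat ** Y) + Y - Gmat X l ** Y) has_derivative
      (\<lambda>h. 0 + 0 - (Gmat X l ** 0 + - (Gmat X l ** (Xtil X ** Dlam h ** transpose (Xtil X)) ** Gmat X l) ** Y))) (at l)"
    by (intro has_derivative_diff has_derivative_add has_derivative_const mm_deriv G_deriv l)
  then show ?thesis
    unfolding Yhat_def by (rule has_derivative_eq_rhs) (simp add: fun_eq_iff mm_minus_l)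
qed

lemma Nmat_eq: "l \<in> U \<Longrightarrow> Nmat X Y bL bU l
    = transpose (Xtil X) ** Gmat X l ** Psi (Yhat X Y l - Y) ** transpose Y ** Gmat X l ** Xtil X"
  by (simp add: Nmat_def S_eq Let_def)

lemma fobj_deriv: "l \<in> U \<Longrightarrow> (fobj X Y bL bU has_derivative (\<lambda>h. inner (gradf X Y bL bU l) h)) (at l)"
proof -
  assume l: "l \<in> U"
  define Q0 where "Q0 = Qhat X Y bL bU lam"
  define F where "F l = Q0 + Psi (Yhat X Y l - Q0)" for l
  define W where "W h = Gmat X l ** (Xtil X ** Dlam h ** transpose (Xtil X)) ** Gmat X l ** Y" for h
  have Fd: "(F has_derivative (\<lambda>h. Psi (W h))) (at l)"
  proof -
    have "((\<lambda>l. Q0 + Psi (Yhat X Y l - Q0)) has_derivative (\<lambda>h. 0 + Psi (W h - 0))) (at l)"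
      unfolding W_def
      by (intro has_derivative_add has_derivative_const bounded_linear.has_derivative[OF Psi_bl]
          has_derivative_diff Yhat_deriv l)
    then show ?thesis unfolding F_def by simp
  qed
  have dF: "((\<lambda>l. F l - Y) has_derivative (\<lambda>h. Psi (W h) - 0)) (at l)"
    by (rule has_derivative_diff[OF Fd has_derivative_const])
  have "((\<lambda>l. (1/2) * inner (F l - Y) (F l - Y)) has_derivative
      (\<lambda>h. (1/2) * (inner (F l - Y) (Psi (W h) - 0) + inner (Psi (W h) - 0) (F l - Y)))) (at l)"
    by (rule has_derivative_mult_right[OF has_derivative_inner[OF dF dF]])
  then have d1: "((\<lambda>l. (1/2) * inner (F l - Y) (F l - Y)) has_derivative
      (\<lambda>h. inner (Psi (F l - Y)) (W h))) (at l)"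
  proof (rule has_derivative_eq_rhs)
    show "(\<lambda>h. (1/2) * (inner (F l - Y) (Psi (W h) - 0) + inner (Psi (W h) - 0) (F l - Y)))
        = (\<lambda>h. inner (Psi (F l - Y)) (W h))"
    proof
      fix h
      have "inner (Psi (W h)) (F l - Y) = inner (F l - Y) (Psi (W h))" by (rule inner_commute)
      then show "(1/2) * (inner (F l - Y) (Psi (W h) - 0) + inner (Psi (W h) - 0) (F l - Y))
        = inner (Psi (F l - Y)) (W h)" by (simp add: Psi_sym)
    qed
  qed
  have FQ: "F y = Qhat X Y bL bU y" if "y \<in> U" for y
    using Qhat_form[OF that] by (simp add: F_def Q0_def)
  have d2: "(fobj X Y bL bU has_derivative (\<lambda>h. inner (Psi (F l - Y)) (W h))) (at l)"
    by (rule has_derivative_transform_within_open[OF d1 U_open l])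
       (simp add: fobj_def FQ power2_norm_eq_inner)
  have PF: "Psi (F l - Y) = Psi (Yhat X Y l - Y)"
  proof -
    have e: "F l - Y = (Yhat X Y l - Y) + (Qhat X Y bL bU l - Yhat X Y l)" using FQ[OF l] by simp
    have "Psi (F l - Y) = Psi (Yhat X Y l - Y) + Psi (Qhat X Y bL bU l - Yhat X Y l)"
      unfolding e by (rule linear_add[OF Psi_linear])
    then show ?thesis using Qhat_Yhat[OF l] by simp
  qed
  have "inner (gradf X Y bL bU l) h = inner (Psi (F l - Y)) (W h)" for h
    unfolding gradf_def Nmat_eq[OF l] PF W_def
    by (rule grad_trace[OF G_sym[OF l]])
  then show ?thesis using d2 by simp
qed


abbreviation "XT \<equiv> Xtil X"
abbreviation "G0 \<equiv> Gmat X lam"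
abbreviation "R0 \<equiv> Psi (Yhat X Y lam - Y)"
abbreviation "Pm i \<equiv> matrix (orth_proj (Ssx i))"

definition "NDD D = - (transpose XT ** (G0 ** D ** G0) ** R0 ** transpose Y ** G0 ** XT)
   + transpose XT ** G0 ** Psi (G0 ** D ** G0 ** Y) ** transpose Y ** G0 ** XT
   - transpose XT ** G0 ** R0 ** transpose Y ** (G0 ** D ** G0) ** XT"

lemma N_deriv: "((\<lambda>l. transpose XT ** Gmat X l ** Psi (Yhat X Y l - Y) ** transpose Y ** Gmat X l ** XT)
   has_derivative (\<lambda>h. NDD (XT ** Dlam h ** transpose XT))) (at lam)"
proof -
  note dG = G_deriv[OF lam_in]
  have dP: "((\<lambda>l. Psi (Yhat X Y l - Y)) has_derivative (\<lambda>h. Psi (G0 ** (XT ** Dlam h ** transpose XT) ** G0 ** Y - 0))) (at lam)"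
    by (rule bounded_linear.has_derivative[OF Psi_bl has_derivative_diff[OF Yhat_deriv[OF lam_in] has_derivative_const]])
  note c1 = mm_deriv[OF has_derivative_const dG, of "transpose XT"]
  note c2 = mm_deriv[OF c1 dP]
  note c3 = mm_deriv[OF c2 has_derivative_const, of "transpose Y"]
  note c4 = mm_deriv[OF c3 dG]
  note c5 = mm_deriv[OF c4 has_derivative_const, of XT]
  show ?thesis
    by (rule has_derivative_eq_rhs[OF c5])
       (simp add: fun_eq_iff NDD_def mm_add_r matrix_add_ldistrib mm_minus_l mm_minus_r mm_diff_l mm_diff_r matrix_mul_assoc)
qed

lemma NDD_linear: "linear NDD"
proof (rule linearI)
  fix a b :: "real^('n::finite)^'n" and c :: real
  show "NDD (a + b) = NDD a + NDD b"
    by (simp add: NDD_def mm_add_r matrix_add_ldistrib linear_add[OF Psi_linear] algebra_simps)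
  show "NDD (c *\<^sub>R a) = c *\<^sub>R NDD a"
    by (simp add: NDD_def mm_scale_l mm_scale_r linear_scale[OF Psi_linear] algebra_simps)
qed

lemma Psi_sum: "Psi Z = (\<Sum>i\<in>UNIV. outer (axis i 1) (axis i 1) ** Z ** (mat 1 - Pm i))"
  by (simp add: sum_rows Psi_def vector_matrix_mult_diff_rdistrib opm_vm)

lemma sym3: "transpose C = C \<Longrightarrow> (transpose XT ** C ** XT) $ l $ k = (transpose XT ** C ** XT) $ k $ l"
  by (rule sym_entry) (simp add: matrix_transpose_mul matrix_mul_assoc)

lemma NDD_entry:
  "NDD (outer (column l XT) (column l XT)) $ k $ k = hessf X Y bL bU lam $ k $ l"
proof -
  let ?x = "column l XT"
  define HG where "HG = transpose XT ** G0 ** XT"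
  define N0 where "N0 = transpose XT ** G0 ** R0 ** transpose Y ** G0 ** XT"
  define A1 where "A1 = transpose XT ** G0 ** Y ** transpose Y ** G0 ** XT"
  define A2 where "A2 i = transpose XT ** G0 ** Y ** Pm i ** transpose Y ** G0 ** XT" for i
  define a where "a i = (transpose XT ** G0) $ k $ i" for i
  define b where "b i = (G0 ** XT) $ i $ l" for i
  have Gs: "transpose G0 = G0" by (rule G_sym[OF lam_in])
  have HGs: "HG $ l $ k = HG $ k $ l" unfolding HG_def by (rule sym3) (rule Gs)
  have A1s: "A1 $ l $ k = A1 $ k $ l" unfolding A1_def
    using sym3[of "G0 ** Y ** transpose Y ** G0" l k] by (simp add: matrix_transpose_mul Gs matrix_mul_assoc)
  have A2s: "A2 i $ l $ k = A2 i $ k $ l" for i unfolding A2_def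
    using sym3[of "G0 ** Y ** Pm i ** transpose Y ** G0" l k] by (simp add: matrix_transpose_mul Gs opm_sym matrix_mul_assoc)
  have T1: "(transpose XT ** (G0 ** outer ?x ?x ** G0) ** R0 ** transpose Y ** G0 ** XT) $ k $ k = HG $ k $ l * N0 $ l $ k"
  proof -
    have "transpose XT ** (G0 ** outer ?x ?x ** G0) ** R0 ** transpose Y ** G0 ** XT
        = (transpose XT ** G0) ** outer ?x ?x ** (G0 ** R0 ** transpose Y ** G0 ** XT)"
      by (simp add: matrix_mul_assoc)
    moreover have f1: "((transpose XT ** G0) *v ?x) $ k = HG $ k $ l" by (simp only: col_mv HG_def)
    moreover have f2: "(?x v* (G0 ** R0 ** transpose Y ** G0 ** XT)) $ k = N0 $ l $ k"
      by (simp only: col_vm N0_def matrix_mul_assoc)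
    ultimately show ?thesis by (simp only: outer3)
  qed
  have T3: "(transpose XT ** G0 ** R0 ** transpose Y ** (G0 ** outer ?x ?x ** G0) ** XT) $ k $ k = N0 $ k $ l * HG $ l $ k"
  proof -
    have "transpose XT ** G0 ** R0 ** transpose Y ** (G0 ** outer ?x ?x ** G0) ** XT
        = (transpose XT ** G0 ** R0 ** transpose Y ** G0) ** outer ?x ?x ** (G0 ** XT)"
      by (simp add: matrix_mul_assoc)
    moreover have f1: "((transpose XT ** G0 ** R0 ** transpose Y ** G0) *v ?x) $ k = N0 $ k $ l"
      by (simp only: col_mv N0_def)
    moreover have f2: "(?x v* (G0 ** XT)) $ k = HG $ l $ k"
      by (simp only: col_vm HG_def matrix_mul_assoc)
    ultimately show ?thesis by (simp only: outer3)
  qed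
  have T2: "(transpose XT ** G0 ** Psi (G0 ** outer ?x ?x ** G0 ** Y) ** transpose Y ** G0 ** XT) $ k $ k
      = (\<Sum>i\<in>UNIV. a i * b i * (A1 $ l $ k - A2 i $ l $ k))"
  proof -
    have "(transpose XT ** G0 ** Psi (G0 ** outer ?x ?x ** G0 ** Y) ** transpose Y ** G0 ** XT)
      = (\<Sum>i\<in>UNIV. (transpose XT ** G0) ** outer (axis i 1) (axis i 1) ** G0 ** outer ?x ?x
          ** (G0 ** Y ** (mat 1 - Pm i) ** transpose Y ** G0 ** XT))"
      unfolding Psi_sum by (simp add: mm_sum_l mm_sum_r matrix_mul_assoc)
    then have "(transpose XT ** G0 ** Psi (G0 ** outer ?x ?x ** G0 ** Y) ** transpose Y ** G0 ** XT) $ k $ k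
      = (\<Sum>i\<in>UNIV. ((transpose XT ** G0) ** outer (axis i 1) (axis i 1) ** G0 ** outer ?x ?x
          ** (G0 ** Y ** (mat 1 - Pm i) ** transpose Y ** G0 ** XT)) $ k $ k)"
      by simp
    also have "\<dots> = (\<Sum>i\<in>UNIV. a i * b i * (A1 $ l $ k - A2 i $ l $ k))"
    proof (intro sum.cong refl)
      fix i
      have e1: "((transpose XT ** G0) *v axis i 1) $ k = a i" by (simp add: a_def mv_axis column_def)
      have e2: "inner (axis i 1 v* G0) ?x = b i"
        by (simp add: axis_vm b_def col_mv[symmetric] matrix_vector_mul_component)
      have e3: "(?x v* (G0 ** Y ** (mat 1 - Pm i) ** transpose Y ** G0 ** XT)) $ k = A1 $ l $ k - A2 i $ l $ k"
        by (simp add: col_vm A1_def A2_def matrix_add_ldistrib mm_diff_l mm_diff_r matrix_mul_assoc)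
      show "((transpose XT ** G0) ** outer (axis i 1) (axis i 1) ** G0 ** outer ?x ?x
          ** (G0 ** Y ** (mat 1 - Pm i) ** transpose Y ** G0 ** XT)) $ k $ k = a i * b i * (A1 $ l $ k - A2 i $ l $ k)"
        by (simp only: outer5 e1 e2 e3)
    qed
    finally show ?thesis .
  qed
  have B1: "(transpose XT ** G0 ** G0 ** XT) $ k $ l = (\<Sum>i\<in>UNIV. a i * b i)"
  proof -
    have "transpose XT ** G0 ** G0 ** XT = (transpose XT ** G0) ** (G0 ** XT)" by (simp add: matrix_mul_assoc)
    then show ?thesis by (simp add: matrix_matrix_mult_def a_def b_def)
  qed
  have B2: "(transpose XT ** G0 ** outer (axis i 1) (axis i 1) ** G0 ** XT) $ k $ l = a i * b i" for i
  proof -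
    have "transpose XT ** G0 ** outer (axis i 1) (axis i 1) ** G0 ** XT
        = (transpose XT ** G0) ** outer (axis i 1) (axis i 1) ** (G0 ** XT)" by (simp add: matrix_mul_assoc)
    then show ?thesis by (simp add: outer3 a_def b_def mv_axis column_def axis_vm)
  qed
  have H: "hessf X Y bL bU lam $ k $ l = A1 $ k $ l * (\<Sum>i\<in>UNIV. a i * b i)
      - HG $ k $ l * (N0 $ k $ l + N0 $ l $ k) - (\<Sum>i\<in>UNIV. A2 i $ k $ l * (a i * b i))"
  proof -
    have tn: "(transpose N0) $ k $ l = N0 $ l $ k" by (simp add: transpose_def)
    show ?thesis unfolding hessf_def Let_def Nmat_eq[OF lam_in] Pact_eq[OF lam_in] N0_def[symmetric] using tn
      by (simp add: hadamard_def B1 B2 A1_def A2_def HG_def)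
  qed
  have ND: "NDD (outer ?x ?x) $ k $ k = - (HG $ k $ l * N0 $ l $ k) + (\<Sum>i\<in>UNIV. a i * b i * (A1 $ l $ k - A2 i $ l $ k))
      - N0 $ k $ l * HG $ l $ k"
    unfolding NDD_def using T1 T2 T3 by simp
  show ?thesis
    unfolding ND H HGs A1s A2s
    by (simp add: sum_subtractf sum_distrib_left algebra_simps)
qed

lemma hess_eq: "diagv (NDD (XT ** Dlam h ** transpose XT)) = hessf X Y bL bU lam *v h"
proof -
  have "NDD (XT ** Dlam h ** transpose XT) = (\<Sum>l\<in>UNIV. h $ l *\<^sub>R NDD (outer (column l XT) (column l XT)))"
    unfolding L_outer by (simp add: linear_sum[OF NDD_linear] linear_scale[OF NDD_linear])
  then show ?thesis
    by (simp add: vec_eq_iff diagv_def matrix_vector_mult_def NDD_entry mult.commute)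
qed

lemma hess_deriv: "(gradf X Y bL bU has_derivative (\<lambda>h. hessf X Y bL bU lam *v h)) (at lam)"
proof -
  have bl: "bounded_linear (diagv :: real^'p^'p \<Rightarrow> real^'p)"
    by (intro linear_conv_bounded_linear[THEN iffD1] linearI) (auto simp: diagv_def vec_eq_iff)
  have "((\<lambda>l. diagv (transpose XT ** Gmat X l ** Psi (Yhat X Y l - Y) ** transpose Y ** Gmat X l ** XT))
      has_derivative (\<lambda>h. diagv (NDD (XT ** Dlam h ** transpose XT)))) (at lam)"
    by (rule bounded_linear.has_derivative[OF bl N_deriv])
  then have "(gradf X Y bL bU has_derivative (\<lambda>h. diagv (NDD (XT ** Dlam h ** transpose XT)))) (at lam)"
    by (rule has_derivative_transform_within_open[OF _ U_open lam_in]) (simp add: gradf_def Nmat_eq)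
  then show ?thesis by (simp add: hess_eq)
qed

end



theorem proposition2:
  fixes X :: "real^'p::finite^'n::finite"
    and Y :: "real^'m::{finite,linorder}^'n"
    and bL bU :: real
    and U :: "(real^'p) set"
    and lam :: "real^'p"
  assumes centered: "\<forall>k. (\<Sum>i\<in>UNIV. X $ i $ k) = 0"
    and bLU: "bL < bU"
    and U_open: "open U"
    and lam_in: "lam \<in> U"
    and invert: "\<forall>l\<in>U. invertible (Xtil X ** Dlam l ** transpose (Xtil X) + mat 1)"
    and act_const: "\<forall>l\<in>U. \<forall>i. active X Y bL bU l i = active X Y bL bU lam i"
  shows "(\<forall>l\<in>U. (fobj X Y bL bU has_derivative (\<lambda>h. inner (gradf X Y bL bU l) h)) (at l))
       \<and> (gradf X Y bL bU has_derivative (\<lambda>h. hessf X Y bL bU lam *v h)) (at lam)"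
  using fobj_deriv[OF bLU U_open lam_in invert act_const] hess_deriv[OF bLU U_open lam_in invert act_const]
  by blast

end
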